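(* There is an absolute constant $\gamma'>0$ such that the following holds. Let $f:X\times Y\to\{0,1\}$, $b>0$, and let $\nu$ be a balanced distribution on $X\times Y$ such that every rectangle $R\subseteq X\times Y$ with $\nu(R)\ge 2^{-b}$ satisfies $\nu(f^{-1}(1)\mid R)\le 3/4$. Let $k\le b$ and let $f_k(x,y)=(f(x_1,y_1),\dots,f(x_k,y_k))$ on $X^k\times Y^k$. Then every rectangle $R\subseteq X^k\times Y^k$ with $\nu^k(R)\ge 2^{-b/2}$ satisfies $\nu^k(\{(x,y)\in R: f_k(x,y)=c\}\mid R)\le 2^{-\gamma' k}$ for every $c\in\{0,1\}^k$ with at least $k/3$ ones.
   Context: A distribution $\nu$ on $X\times Y$ is balanced for $f$ if $\nu(f^{-1}(0))=\nu(f^{-1}(1))=1/2$. Rectangles are product sets; $\nu^k$ is the $k$-fold product distribution on $X^k\times Y^k$. *)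

theory Defs
  imports "HOL-Probability.Probability"
begin

text \<open>Inputs are encoded as natural numbers; X and Y are finite sets of naturals.
  A boolean function value True stands for 1, False for 0.\<close>

definition balanced :: "(nat \<times> nat) pmf \<Rightarrow> (nat \<Rightarrow> nat \<Rightarrow> bool) \<Rightarrow> bool" where
  "balanced \<nu> f \<longleftrightarrow>
     measure_pmf.prob \<nu> {p. \<not> f (fst p) (snd p)} = 1/2 \<and>
     measure_pmf.prob \<nu> {p. f (fst p) (snd p)} = 1/2"

definition cond_prob :: "'c pmf \<Rightarrow> 'c set \<Rightarrow> 'c set \<Rightarrow> real" where
  "cond_prob \<mu> E R = measure_pmf.prob \<mu> (E \<inter> R) / measure_pmf.prob \<mu> R"

text \<open>The k-fold product distribution on X^k \<times> Y^k (tuples as lists of length k).\<close>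
definition pow_pmf :: "nat \<Rightarrow> ('a \<times> 'b) pmf \<Rightarrow> ('a list \<times> 'b list) pmf" where
  "pow_pmf k \<nu> = map_pmf (\<lambda>zs. (map fst zs, map snd zs)) (replicate_pmf k \<nu>)"

definition f_pow :: "('a \<Rightarrow> 'b \<Rightarrow> bool) \<Rightarrow> 'a list \<Rightarrow> 'b list \<Rightarrow> bool list" where
  "f_pow f xs ys = map2 f xs ys"

end

theory Submission imports Defs begin
lemma aux_id:
  fixes r a :: real and n :: nat
  assumes "a \<noteq> 0"
  shows "(r^k/2)^n = (r^n * a)^k * (1/a)^k / 2^n"
proof -
  have "(r^n * a)^k * (1/a)^k = (r^n * a * (1/a))^k" by (simp only: power_mult_distrib)
  also have "\<dots> = (r^n)^k" using assms by simp
  also have "\<dots> = (r^k)^n" by (simp flip: power_mult add: mult.commute)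
  finally show ?thesis by (simp add: power_divide)
qed

lemma numeric:
  fixes q s :: real and t k :: nat
  assumes kt: "real k \<le> 3 * real t" and q: "q = (3/4)^t" and s0: "0 \<le> s" and s1: "s \<le> 1"
    and s2: "s^2 \<le> (1/2)^k"
  shows "q + s*(1-q) \<le> (995/1000)^k"
proof -
  define \<rho> :: real where "\<rho> = 995/1000"
  have q0: "0 \<le> q" "q \<le> 1" using q by (auto simp: power_le_one)
  consider "k = 0" | "1 \<le> k" "k \<le> 14" | "15 \<le> k" by linarith
  then show ?thesis
  proof cases
    case 1
    have "(1-q)*(1-s) \<ge> 0" using q0 s1 by simp
    then have "q + s*(1-q) \<le> 1" by (simp add: algebra_simps)
    then show ?thesis using 1 by simp
  next
    case 2
    have "1 \<le> t" using 2 kt by linarith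
    then have "q \<le> 3/4" using q using power_decreasing[of 1 t "3/4::real"] by simp
    have "(1/2::real)^k \<le> 1/2" using 2 power_decreasing[of 1 k "1/2::real"] by simp
    then have "s^2 \<le> 1/2" using s2 by linarith
    then have sb: "s \<le> 7072/10000"
    proof -
      have "\<not> s > 7072/10000"
      proof
        assume "s > 7072/10000"
        then have "s * s > (7072/10000)*(7072/10000)" by (intro mult_strict_mono) auto
        then show False using \<open>s^2 \<le> 1/2\<close> by (simp add: power2_eq_square)
      qed
      then show ?thesis by linarith
    qed
    have lhs: "q + s*(1-q) \<le> 9268/10000"
    proof -
      have "q + s*(1-q) = 1 - (1-q)*(1-s)" by (simp add: algebra_simps)
      moreover have "(1-q)*(1-s) \<ge> (1/4)*(2928/10000)"
        using \<open>q \<le> 3/4\<close> sb by (intro mult_mono) auto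
      ultimately show ?thesis by linarith
    qed
    have p1: "(995/1000::real)^14 \<le> (995/1000)^k"
      using 2 by (intro power_decreasing) auto
    have "1 + real 14 * (-5/1000) \<le> (1 + (-5/1000::real))^14"
      by (rule Bernoulli_inequality) auto
    then have p2: "93/100 \<le> (995/1000::real)^14" by simp
    show ?thesis using lhs p1 p2 by linarith
  next
    case 3
    have r6: "(97/100::real) \<le> (995/1000)^6"
    proof -
      have "1 + real 6 * (-5/1000) \<le> (1 + (-5/1000::real))^6"
        by (rule Bernoulli_inequality) auto
      then show ?thesis by simp
    qed
    have a1: "(17/10::real)^12 \<le> (17/10)^k" using 3 by (intro power_increasing) auto
    have "(2::real)^6 \<le> ((17/10)^2)^6" by (intro power_mono) (auto simp: power2_eq_square)
    moreover have "((17/10::real)^2)^6 = (17/10)^12" by (simp flip: power_mult)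
    ultimately have "64 \<le> (17/10::real)^12" by simp
    then have "64 \<le> (17/10::real)^k" using a1 by linarith
    also have "\<dots> \<le> ((995/1000)^6 * (16/9))^k"
      using r6 by (intro power_mono) auto
    finally have A: "64 \<le> ((995/1000::real)^6 * (16/9))^k" .
    have "q^6 = (3/4)^(6*t)" using q by (simp add: power_mult[symmetric] mult.commute)
    also have "\<dots> \<le> (3/4)^(2*k)" using kt by (intro power_decreasing) auto
    also have "\<dots> = (9/16)^k" by (simp add: power_mult power2_eq_square)
    also have "\<dots> \<le> ((995/1000::real)^k/2)^6"
    proof -
      have e1: "((995/1000::real)^k/2)^6 = ((995/1000::real)^6 * (16/9))^k * (9/16)^k / 64"
        using aux_id[of "16/9" "995/1000" k 6] by simp
      have e2: "64 * (9/16::real)^k \<le> ((995/1000::real)^6 * (16/9))^k * (9/16)^k"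
        by (rule mult_right_mono[OF A]) simp
      show ?thesis using e1 e2 by linarith
    qed
    finally have "q^6 \<le> ((995/1000::real)^k/2)^6" .
    then have "q^Suc 5 \<le> ((995/1000::real)^k/2)^Suc 5" by (simp add: numeral_eq_Suc del: power_Suc)
    then have qb: "q \<le> (995/1000::real)^k/2"
      by (rule power_le_imp_le_base) auto
    have B: "4 \<le> ((995/1000::real)^2 * 2)^k"
    proof -
      have "1 + real k * (98/100) \<le> (1 + (98/100::real))^k"
        by (rule Bernoulli_inequality) auto
      moreover have "(1 + (98/100::real))^k \<le> ((995/1000::real)^2 * 2)^k"
        by (intro power_mono) (auto simp: power2_eq_square)
      moreover have "1 + real k * (98/100) \<ge> 4" using 3 by simp
      ultimately show ?thesis by linarith
    qed
    have "s^2 \<le> ((995/1000::real)^k/2)^2"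
    proof -
      have e1: "((995/1000::real)^k/2)^2 = ((995/1000::real)^2 * 2)^k * (1/2)^k / 4"
        using aux_id[of "2" "995/1000" k 2] by simp
      have e2: "4 * (1/2::real)^k \<le> ((995/1000::real)^2 * 2)^k * (1/2)^k"
        by (rule mult_right_mono[OF B]) simp
      show ?thesis using e1 e2 s2 by linarith
    qed
    then have "s^Suc 1 \<le> ((995/1000::real)^k/2)^Suc 1" by (simp add: numeral_eq_Suc del: power_Suc)
    then have sb: "s \<le> (995/1000::real)^k/2"
      by (rule power_le_imp_le_base) auto
    have "s*(1-q) \<le> s" using q0 s0 by (simp add: mult_left_le)
    then show ?thesis using qb sb by linarith
  qed
qed

lemma measure_bind_pmf_int:
  "measure_pmf.prob (bind_pmf M N) X = (\<integral>x. measure_pmf.prob (N x) X \<partial>M)"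
proof -
  have "emeasure (measure_pmf (bind_pmf M N)) X = (\<integral>\<^sup>+x. emeasure (measure_pmf (N x)) X \<partial>M)"
    by (rule emeasure_bind_pmf)
  also have "\<dots> = (\<integral>\<^sup>+x. ennreal (measure_pmf.prob (N x) X) \<partial>M)"
    by (simp add: measure_pmf.emeasure_eq_measure)
  also have "\<dots> = ennreal (\<integral>x. measure_pmf.prob (N x) X \<partial>M)"
    by (rule nn_integral_eq_integral)
       (auto intro!: measure_pmf.integrable_const_bound[where B=1])
  finally show ?thesis
    by (simp add: measure_pmf.emeasure_eq_measure integral_nonneg_AE)
qed

lemma rep_outer:
  "measure_pmf.prob (replicate_pmf (Suc k) p) Q =
     (\<integral>z. measure_pmf.prob (replicate_pmf k p) {zs. z#zs \<in> Q} \<partial>p)"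
  by (simp add: measure_bind_pmf_int map_pmf_def[symmetric] vimage_def)

lemma rep_inner:
  "measure_pmf.prob (replicate_pmf (Suc k) p) Q =
     (\<integral>zs. measure_pmf.prob p {z. z#zs \<in> Q} \<partial>replicate_pmf k p)"
proof -
  have "replicate_pmf (Suc k) p = bind_pmf (replicate_pmf k p) (\<lambda>xs. map_pmf (\<lambda>x. x#xs) p)"
    by (simp add: bind_commute_pmf[of p] map_pmf_def)
  then show ?thesis by (simp add: measure_bind_pmf_int vimage_def)
qed

definition Ev :: "(nat \<Rightarrow> nat \<Rightarrow> bool) \<Rightarrow> bool list \<Rightarrow> (nat \<times> nat) list set" where
  "Ev f c = {zs. list_all2 (\<lambda>b z. b \<longrightarrow> f (fst z) (snd z)) c zs}"

definition Rs :: "nat list set \<Rightarrow> nat list set \<Rightarrow> (nat \<times> nat) list set" where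
  "Rs A B = {zs. map fst zs \<in> A \<and> map snd zs \<in> B}"

lemma slice_bound:
  fixes \<nu> :: "(nat \<times> nat) pmf"
  assumes sup: "set_pmf \<nu> \<subseteq> X \<times> Y"
    and hyp: "\<forall>A B. A \<subseteq> X \<longrightarrow> B \<subseteq> Y \<longrightarrow> measure_pmf.prob \<nu> (A \<times> B) \<ge> 2 powr (-b) \<longrightarrow>
          cond_prob \<nu> {p. f (fst p) (snd p)} (A \<times> B) \<le> 3/4"
  shows "measure_pmf.prob \<nu> ({p. f (fst p) (snd p)} \<inter> (A' \<times> B')) \<le>
           3/4 * measure_pmf.prob \<nu> (A' \<times> B') + 1/4 * 2 powr (-b)"
proof -
  let ?F = "{p. f (fst p) (snd p)}"
  let ?A = "A' \<inter> X" and ?B = "B' \<inter> Y"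
  have e1: "measure_pmf.prob \<nu> (?A \<times> ?B) = measure_pmf.prob \<nu> (A' \<times> B')"
  proof -
    have "(?A \<times> ?B) \<inter> set_pmf \<nu> = (A' \<times> B') \<inter> set_pmf \<nu>" using sup by auto
    then show ?thesis by (metis measure_Int_set_pmf)
  qed
  have e2: "measure_pmf.prob \<nu> (?F \<inter> (?A \<times> ?B)) = measure_pmf.prob \<nu> (?F \<inter> (A' \<times> B'))"
  proof -
    have "(?F \<inter> (?A \<times> ?B)) \<inter> set_pmf \<nu> = (?F \<inter> (A' \<times> B')) \<inter> set_pmf \<nu>" using sup by auto
    then show ?thesis by (metis measure_Int_set_pmf)
  qed
  have mono: "measure_pmf.prob \<nu> (?F \<inter> (A' \<times> B')) \<le> measure_pmf.prob \<nu> (A' \<times> B')"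
    by (rule measure_pmf.finite_measure_mono) auto
  have pos: "0 < (2::real) powr (-b)" by simp
  show ?thesis
  proof (cases "measure_pmf.prob \<nu> (A' \<times> B') \<ge> 2 powr (-b)")
    case True
    then have "cond_prob \<nu> ?F (?A \<times> ?B) \<le> 3/4" using hyp e1 by auto
    moreover have "measure_pmf.prob \<nu> (?A \<times> ?B) > 0" using True e1 pos by linarith
    ultimately have "measure_pmf.prob \<nu> (?F \<inter> (?A \<times> ?B)) \<le> 3/4 * measure_pmf.prob \<nu> (?A \<times> ?B)"
      by (simp add: cond_prob_def divide_le_eq)
    then show ?thesis using e1 e2 pos by linarith
  next
    case False
    then show ?thesis using mono by linarith
  qed
qed

lemma finite_rep: "finite (set_pmf p) \<Longrightarrow> finite (set_pmf (replicate_pmf k p))"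
  by (simp add: set_replicate_pmf lists_eq_set finite_lists_length_eq)

lemma main_bound:
  fixes \<nu> :: "(nat \<times> nat) pmf"
  assumes sup: "set_pmf \<nu> \<subseteq> X \<times> Y" and fin: "finite X" "finite Y"
    and hyp: "\<forall>A B. A \<subseteq> X \<longrightarrow> B \<subseteq> Y \<longrightarrow> measure_pmf.prob \<nu> (A \<times> B) \<ge> 2 powr (-b) \<longrightarrow>
          cond_prob \<nu> {p. f (fst p) (snd p)} (A \<times> B) \<le> 3/4"
  shows "\<forall>c A B. length c = k \<longrightarrow>
    measure_pmf.prob (replicate_pmf k \<nu>) (Ev f c \<inter> Rs A B) \<le>
      (3/4)^(length (filter id c)) * measure_pmf.prob (replicate_pmf k \<nu>) (Rs A B)
      + 2 powr (-b) * (1 - (3/4)^(length (filter id c)))"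
proof (induction k)
  case 0
  show ?case
  proof (intro allI impI)
    fix c :: "bool list" and A B assume "length c = 0"
    then have "c = []" by simp
    have "measure_pmf.prob (replicate_pmf 0 \<nu>) (Ev f c \<inter> Rs A B) \<le> measure_pmf.prob (replicate_pmf 0 \<nu>) (Rs A B)"
      by (rule measure_pmf.finite_measure_mono) auto
    then show "measure_pmf.prob (replicate_pmf 0 \<nu>) (Ev f c \<inter> Rs A B) \<le>
      (3/4)^(length (filter id c)) * measure_pmf.prob (replicate_pmf 0 \<nu>) (Rs A B)
      + 2 powr (-b) * (1 - (3/4)^(length (filter id c)))" using \<open>c = []\<close> by simp
  qed
next
  case (Suc k)
  have finnu: "finite (set_pmf \<nu>)" using sup fin by (meson finite_SigmaI finite_subset)
  have int_rep: "integrable (measure_pmf (replicate_pmf k \<nu>)) g" for g :: "_ \<Rightarrow> real"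
    by (rule integrable_measure_pmf_finite) (rule finite_rep[OF finnu])
  have int_nu: "integrable (measure_pmf \<nu>) g" for g :: "_ \<Rightarrow> real"
    by (rule integrable_measure_pmf_finite) (rule finnu)
  show ?case
  proof (intro allI impI)
    fix c :: "bool list" and A B assume lc: "length c = Suc k"
    then obtain c0 c' where c: "c = c0 # c'" and lc': "length c' = k" by (cases c) auto
    define t where "t = length (filter id c')"
    define q :: real where "q = (3/4)^t"
    define C :: real where "C = 2 powr (-b)"
    define P where "P = measure_pmf.prob (replicate_pmf (Suc k) \<nu>)"
    define Pk where "Pk = measure_pmf.prob (replicate_pmf k \<nu>)"
    have q0: "0 \<le> q" by (simp add: q_def)
    have IH': "\<And>A B. Pk (Ev f c' \<inter> Rs A B) \<le> q * Pk (Rs A B) + C * (1 - q)"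
      using Suc.IH lc' unfolding Pk_def q_def C_def t_def by blast
    have FB: "P (Ev f (False # c') \<inter> Rs A B) \<le> q * P (Rs A B) + C * (1 - q)"
    proof -
      have "P (Ev f (False # c') \<inter> Rs A B) =
          (\<integral>z. Pk (Ev f c' \<inter> Rs {xs. fst z # xs \<in> A} {ys. snd z # ys \<in> B}) \<partial>\<nu>)"
      proof -
        have "\<And>z. {zs. z # zs \<in> Ev f (False # c') \<inter> Rs A B} = Ev f c' \<inter> Rs {xs. fst z # xs \<in> A} {ys. snd z # ys \<in> B}"
          by (auto simp: Ev_def Rs_def)
        then show ?thesis unfolding P_def Pk_def rep_outer by simp
      qed
      also have "\<dots> \<le> (\<integral>z. q * Pk (Rs {xs. fst z # xs \<in> A} {ys. snd z # ys \<in> B}) + C * (1 - q) \<partial>\<nu>)"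
        by (intro integral_mono int_nu IH')
      also have "\<dots> = q * (\<integral>z. Pk (Rs {xs. fst z # xs \<in> A} {ys. snd z # ys \<in> B}) \<partial>\<nu>) + C * (1 - q)"
        using int_nu by simp
      also have "(\<integral>z. Pk (Rs {xs. fst z # xs \<in> A} {ys. snd z # ys \<in> B}) \<partial>\<nu>) = P (Rs A B)"
      proof -
        have "\<And>z. {zs. z # zs \<in> Rs A B} = Rs {xs. fst z # xs \<in> A} {ys. snd z # ys \<in> B}"
          by (auto simp: Rs_def)
        then show ?thesis unfolding P_def Pk_def rep_outer by simp
      qed
      finally show ?thesis .
    qed
    show "P (Ev f c \<inter> Rs A B) \<le>
      (3/4)^(length (filter id c)) * P (Rs A B) + 2 powr (-b) * (1 - (3/4)^(length (filter id c)))"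
    proof (cases c0)
      case False
      then show ?thesis using FB c by (simp add: q_def C_def t_def)
    next
      case True
      let ?S = "\<lambda>zs. {x. x # map fst zs \<in> A} \<times> {y. y # map snd zs \<in> B}"
      let ?L = "\<lambda>zs. list_all2 (\<lambda>b z. b \<longrightarrow> f (fst z) (snd z)) c' zs"
      have "P (Ev f (True # c') \<inter> Rs A B) =
          (\<integral>zs. (if ?L zs then measure_pmf.prob \<nu> ({p. f (fst p) (snd p)} \<inter> ?S zs) else 0) \<partial>replicate_pmf k \<nu>)"
      proof -
        have "\<And>zs. measure_pmf.prob \<nu> {z. z # zs \<in> Ev f (True # c') \<inter> Rs A B} =
           (if ?L zs then measure_pmf.prob \<nu> ({p. f (fst p) (snd p)} \<inter> ?S zs) else 0)"
        proof -
          fix zs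
          have "{z. z # zs \<in> Ev f (True # c') \<inter> Rs A B} = (if ?L zs then {p. f (fst p) (snd p)} \<inter> ?S zs else {})"
            by (auto simp: Ev_def Rs_def)
          then show "?thesis zs" by simp
        qed
        then show ?thesis unfolding P_def rep_inner by simp
      qed
      also have "\<dots> \<le> (\<integral>zs. 3/4 * (if ?L zs then measure_pmf.prob \<nu> (?S zs) else 0) + 1/4 * C \<partial>replicate_pmf k \<nu>)"
        using slice_bound[OF sup hyp] by (intro integral_mono int_rep) (auto simp: C_def)
      also have "\<dots> = 3/4 * (\<integral>zs. (if ?L zs then measure_pmf.prob \<nu> (?S zs) else 0) \<partial>replicate_pmf k \<nu>) + 1/4 * C"
        using int_rep by simp
      also have "(\<integral>zs. (if ?L zs then measure_pmf.prob \<nu> (?S zs) else 0) \<partial>replicate_pmf k \<nu>) = P (Ev f (False # c') \<inter> Rs A B)"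
      proof -
        have "\<And>zs. measure_pmf.prob \<nu> {z. z # zs \<in> Ev f (False # c') \<inter> Rs A B} =
           (if ?L zs then measure_pmf.prob \<nu> (?S zs) else 0)"
        proof -
          fix zs
          have "{z. z # zs \<in> Ev f (False # c') \<inter> Rs A B} = (if ?L zs then ?S zs else {})"
            by (auto simp: Ev_def Rs_def)
          then show "?thesis zs" by simp
        qed
        then show ?thesis unfolding P_def rep_inner by simp
      qed
      finally have "P (Ev f (True # c') \<inter> Rs A B) \<le> 3/4 * P (Ev f (False # c') \<inter> Rs A B) + 1/4 * C" .
      moreover have "3/4 * P (Ev f (False # c') \<inter> Rs A B) \<le> 3/4 * (q * P (Rs A B) + C * (1 - q))"
        using FB by (rule mult_left_mono) simp
      ultimately have "P (Ev f (True # c') \<inter> Rs A B) \<le> 3/4 * (q * P (Rs A B) + C * (1 - q)) + 1/4 * C"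
        by linarith
      then show ?thesis using c True by (simp add: q_def C_def t_def algebra_simps)
    qed
  qed
qed

lemma map2_all2: "list_all2 (\<lambda>b z. b \<longrightarrow> f (fst z) (snd z)) (map2 f (map fst zs) (map snd zs)) zs"
  by (induction zs) auto

theorem mainTheorem11:
  shows "\<exists>\<gamma>::real. \<gamma> > 0 \<and>
    (\<forall>(X::nat set) (Y::nat set) (f::nat \<Rightarrow> nat \<Rightarrow> bool) (b::real) (\<nu>::(nat \<times> nat) pmf) (k::nat).
      finite X \<longrightarrow> finite Y \<longrightarrow> set_pmf \<nu> \<subseteq> X \<times> Y \<longrightarrow> b > 0 \<longrightarrow> balanced \<nu> f \<longrightarrow>
      (\<forall>A B. A \<subseteq> X \<longrightarrow> B \<subseteq> Y \<longrightarrow> measure_pmf.prob \<nu> (A \<times> B) \<ge> 2 powr (-b) \<longrightarrow>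
          cond_prob \<nu> {p. f (fst p) (snd p)} (A \<times> B) \<le> 3/4) \<longrightarrow>
      real k \<le> b \<longrightarrow>
      (\<forall>A B. A \<subseteq> {xs. length xs = k \<and> set xs \<subseteq> X} \<longrightarrow> B \<subseteq> {ys. length ys = k \<and> set ys \<subseteq> Y} \<longrightarrow>
          measure_pmf.prob (pow_pmf k \<nu>) (A \<times> B) \<ge> 2 powr (-b/2) \<longrightarrow>
          (\<forall>c::bool list. length c = k \<longrightarrow> real (length (filter id c)) \<ge> real k / 3 \<longrightarrow>
             cond_prob (pow_pmf k \<nu>) {p. f_pow f (fst p) (snd p) = c} (A \<times> B)
               \<le> 2 powr (-\<gamma> * real k))))"
proof (intro exI[of _ "- log 2 (995/1000)"] conjI allI impI)
  show "0 < - log 2 (995/1000::real)" by simp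
next
  fix X Y :: "nat set" and f b and \<nu> :: "(nat \<times> nat) pmf" and k :: nat and A B and c :: "bool list"
  assume fX: "finite X" and fY: "finite Y" and sup: "set_pmf \<nu> \<subseteq> X \<times> Y" and b0: "b > 0"
    and bal: "balanced \<nu> f"
    and hyp: "\<forall>A B. A \<subseteq> X \<longrightarrow> B \<subseteq> Y \<longrightarrow> measure_pmf.prob \<nu> (A \<times> B) \<ge> 2 powr (-b) \<longrightarrow>
          cond_prob \<nu> {p. f (fst p) (snd p)} (A \<times> B) \<le> 3/4"
    and kb: "real k \<le> b" and hA: "A \<subseteq> {xs. length xs = k \<and> set xs \<subseteq> X}"
    and hB: "B \<subseteq> {ys. length ys = k \<and> set ys \<subseteq> Y}"
    and hm: "measure_pmf.prob (pow_pmf k \<nu>) (A \<times> B) \<ge> 2 powr (-b/2)"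
    and lc: "length c = k" and hc: "real (length (filter id c)) \<ge> real k / 3"
  define g where "g = (\<lambda>zs::(nat \<times> nat) list. (map fst zs, map snd zs))"
  define Q where "Q = replicate_pmf k \<nu>"
  define m where "m = measure_pmf.prob (pow_pmf k \<nu>) (A \<times> B)"
  define t where "t = length (filter id c)"
  define q :: real where "q = (3/4)^t"
  define s :: real where "s = 2 powr (-b/2)"
  define num where "num = measure_pmf.prob (pow_pmf k \<nu>) ({p. f_pow f (fst p) (snd p) = c} \<inter> A \<times> B)"
  have pm: "measure_pmf.prob (pow_pmf k \<nu>) S = measure_pmf.prob Q (g -` S)" for S
    by (simp add: pow_pmf_def Q_def g_def)
  have mR: "m = measure_pmf.prob Q (Rs A B)"
    unfolding m_def pm by (simp add: g_def Rs_def vimage_def)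
  have "num = measure_pmf.prob Q (g -` ({p. f_pow f (fst p) (snd p) = c} \<inter> A \<times> B) \<inter> set_pmf Q)"
    unfolding num_def pm by (simp add: measure_Int_set_pmf)
  also have "\<dots> \<le> measure_pmf.prob Q (Ev f c \<inter> Rs A B)"
  proof (rule measure_pmf.finite_measure_mono)
    show "g -` ({p. f_pow f (fst p) (snd p) = c} \<inter> A \<times> B) \<inter> set_pmf Q \<subseteq> Ev f c \<inter> Rs A B"
    proof
      fix zs assume "zs \<in> g -` ({p. f_pow f (fst p) (snd p) = c} \<inter> A \<times> B) \<inter> set_pmf Q"
      then have "map2 f (map fst zs) (map snd zs) = c" "map fst zs \<in> A" "map snd zs \<in> B"
        by (auto simp: g_def f_pow_def)
      then show "zs \<in> Ev f c \<inter> Rs A B" using map2_all2[of f zs] by (auto simp: Ev_def Rs_def)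
    qed
  qed simp
  also have "\<dots> \<le> q * m + 2 powr (-b) * (1 - q)"
    using main_bound[OF sup fX fY hyp, of k] lc unfolding mR q_def t_def Q_def by blast
  finally have numb: "num \<le> q * m + 2 powr (-b) * (1 - q)" .
  have s0: "0 < s" by (simp add: s_def)
  have sm: "s \<le> m" using hm by (simp add: s_def m_def)
  have ss: "2 powr (-b) = s^2"
    by (simp add: s_def power2_eq_square flip: powr_add)
  have q0: "0 \<le> q" "q \<le> 1" by (auto simp: q_def power_le_one)
  have "num / m \<le> (q * m + s^2 * (1 - q)) / m"
    using numb ss s0 sm by (intro divide_right_mono) auto
  also have "\<dots> = q + (s^2 / m) * (1 - q)" using s0 sm by (simp add: field_simps)
  also have "\<dots> \<le> q + s * (1 - q)"
  proof -
    have "s^2 / m \<le> s" using s0 sm by (simp add: power2_eq_square divide_le_eq mult_left_mono)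
    then have "(s^2 / m) * (1 - q) \<le> s * (1 - q)" using q0 by (intro mult_right_mono) auto
    then show ?thesis by linarith
  qed
  also have "\<dots> \<le> (995/1000)^k"
  proof (rule numeric)
    show "real k \<le> 3 * real t" using hc by (simp add: t_def)
    show "q = (3/4)^t" by (simp add: q_def)
    show "0 \<le> s" using s0 by simp
    have "(2::real) powr (-b/2) \<le> 2 powr 0" using b0 by (intro powr_mono) auto
    then show "s \<le> 1" by (simp add: s_def)
    have "s^2 = 2 powr (-b)" using ss by simp
    also have "\<dots> \<le> 2 powr (- real k)" using kb by simp
    also have "\<dots> = (1/2)^k" by (simp add: powr_minus powr_realpow power_one_over inverse_eq_divide)
    finally show "s^2 \<le> (1/2)^k" .
  qed
  also have "(995/1000::real)^k = 2 powr (- (- log 2 (995/1000)) * real k)"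
  proof -
    have "2 powr (- (- log 2 (995/1000)) * real k) = (2 powr (log 2 (995/1000))) powr real k"
      by (simp only: powr_powr minus_minus)
    also have "\<dots> = (995/1000) powr real k" by simp
    also have "\<dots> = (995/1000)^k" by (simp add: powr_realpow)
    finally show ?thesis by simp
  qed
  finally show "cond_prob (pow_pmf k \<nu>) {p. f_pow f (fst p) (snd p) = c} (A \<times> B)
               \<le> 2 powr (- (- log 2 (995/1000)) * real k)"
    by (simp add: cond_prob_def num_def m_def)
qed

end
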